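(* Let $S$ be a solenoid. Then the Cartesian product $[0,1]\times S$ has the fupcon property; that is, for every continuum $M\subseteq [0,1]\times S$ with $\pi_{[0,1]}(M)=[0,1]$ and $\pi_S(M)=S$, and for every open set $U\subseteq [0,1]\times S$ with $M\subseteq U$, there exists an open connected set $V$ with $M\subseteq V\subseteq U$.
   Context: A continuum is a nonempty compact connected Hausdorff space (here metric). A solenoid is a continuum homeomorphic to an inverse limit $\varprojlim\{\mathbb{S}^1, f_i\}$ of unit circles $\mathbb{S}^1\subseteq\mathbb{C}$ with bonding maps $f_i(z)=z^{n_i}$, where each $n_i\geq 2$ is an integer. For a product $X\times Y$ of continua, $\pi_X,\pi_Y$ denote the coordinate projections. $X\times Y$ has the fupcon property if every subcontinuum $M\subseteq X\times Y$ with full projections ($\pi_X(M)=X$ and $\pi_Y(M)=Y$) has arbitrarily small open connected neighborhoods, i.e. for every open $U\supseteq M$ there is an open connected $V$ with $M\subseteq V\subseteq U$. *)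

theory Defs
  imports "HOL-Analysis.Analysis"
begin

text \<open>The inverse limit of unit circles with bonding maps f_i(z) = z^(n i),
  f_i : S^1_(i+1) -> S^1_i, as a subspace of the product space of countably many
  copies of the complex plane.\<close>
definition solenoid_inverse_limit :: "(nat \<Rightarrow> nat) \<Rightarrow> (nat \<Rightarrow> complex) topology" where
  "solenoid_inverse_limit n =
     subtopology (product_topology (\<lambda>i. euclidean) UNIV)
       {z. \<forall>i. z i \<in> sphere 0 1 \<and> z i = (z (Suc i)) ^ (n i)}"

definition solenoid :: "'a topology \<Rightarrow> bool" where
  "solenoid X \<longleftrightarrow> (\<exists>n. (\<forall>i. n i \<ge> 2) \<and> X homeomorphic_space solenoid_inverse_limit n)"

definition continuum_in :: "'a topology \<Rightarrow> 'a set \<Rightarrow> bool" where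
  "continuum_in X M \<longleftrightarrow> M \<noteq> {} \<and> compactin X M \<and> connectedin X M"

definition fupcon :: "'a topology \<Rightarrow> 'b topology \<Rightarrow> bool" where
  "fupcon X Y \<longleftrightarrow>
     (\<forall>M. continuum_in (prod_topology X Y) M \<and> fst ` M = topspace X \<and> snd ` M = topspace Y \<longrightarrow>
        (\<forall>U. openin (prod_topology X Y) U \<and> M \<subseteq> U \<longrightarrow>
           (\<exists>V. openin (prod_topology X Y) V \<and> connectedin (prod_topology X Y) V \<and> M \<subseteq> V \<and> V \<subseteq> U)))"

end

theory Submission
  imports Defs
begin

lemma fupcon_homeo:
  fixes X :: "'c topology" and Y :: "'a topology" and Y' :: "'b topology"
  assumes hs: "Y homeomorphic_space Y'" and fu: "fupcon X Y'"
  shows "fupcon X Y"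
proof -
  obtain f g where fg: "homeomorphic_maps Y Y' f g" using hs homeomorphic_space_def by blast
  define h :: "'c \<times> 'a \<Rightarrow> 'c \<times> 'b" where "h = (\<lambda>(x,y). (id x, f y))"
  define h' :: "'c \<times> 'b \<Rightarrow> 'c \<times> 'a" where "h' = (\<lambda>(x,y). (id x, g y))"
  have hh: "homeomorphic_maps (prod_topology X Y) (prod_topology X Y') h h'"
  proof -
    have "homeomorphic_maps X X id id" by (simp add: homeomorphic_maps_id)
    then show ?thesis unfolding h_def h'_def homeomorphic_maps_prod using fg by blast
  qed
  have hm: "homeomorphic_map (prod_topology X Y) (prod_topology X Y') h"
   and hm': "homeomorphic_map (prod_topology X Y') (prod_topology X Y) h'"
    using hh homeomorphic_maps_imp_map homeomorphic_maps_sym by metis+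
  have inv1: "\<And>p. p \<in> topspace (prod_topology X Y) \<Longrightarrow> h' (h p) = p"
   and inv2: "\<And>p. p \<in> topspace (prod_topology X Y') \<Longrightarrow> h (h' p) = p"
    using hh unfolding homeomorphic_maps_def by auto
  have fg1: "\<And>y. y \<in> topspace Y \<Longrightarrow> g (f y) = y" and fg2: "\<And>y. y \<in> topspace Y' \<Longrightarrow> f (g y) = y"
   and fY: "f ` topspace Y \<subseteq> topspace Y'"
    using fg unfolding homeomorphic_maps_def continuous_map_def by auto
  show ?thesis unfolding fupcon_def
  proof (intro allI impI, elim conjE)
    fix M U
    assume M: "continuum_in (prod_topology X Y) M" and M1: "fst ` M = topspace X" and M2: "snd ` M = topspace Y"
       and U: "openin (prod_topology X Y) U" "M \<subseteq> U"
    have Mt: "M \<subseteq> topspace (prod_topology X Y)" using M compactin_subset_topspace continuum_in_def by blast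
    have Ut: "U \<subseteq> topspace (prod_topology X Y)" using U openin_subset by blast
    have M': "continuum_in (prod_topology X Y') (h ` M)"
      using M Mt unfolding continuum_in_def
      by (simp add: homeomorphic_map_compactness[OF hm] homeomorphic_map_connectedness[OF hm])
    have M1': "fst ` (h ` M) = topspace X" using M1 by (force simp: h_def)
    have M2': "snd ` (h ` M) = topspace Y'"
    proof -
      have "snd ` (h ` M) = f ` (snd ` M)" by (force simp: h_def)
      also have "\<dots> = topspace Y'"
      proof
        show "f ` snd ` M \<subseteq> topspace Y'" using M2 fY by auto
        show "topspace Y' \<subseteq> f ` snd ` M"
        proof
          fix y assume y: "y \<in> topspace Y'"
          then have "g y \<in> topspace Y" using fg unfolding homeomorphic_maps_def continuous_map_def by auto
          then show "y \<in> f ` snd ` M" using M2 fg2[OF y] by (metis image_eqI)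
        qed
      qed
      finally show ?thesis .
    qed
    have U': "openin (prod_topology X Y') (h ` U)" using homeomorphic_map_openness[OF hm Ut] U by blast
    obtain V' where V': "openin (prod_topology X Y') V'" "connectedin (prod_topology X Y') V'"
        "h ` M \<subseteq> V'" "V' \<subseteq> h ` U"
      using fu M' M1' M2' U' U(2) unfolding fupcon_def by (meson image_mono)
    have V't: "V' \<subseteq> topspace (prod_topology X Y')" using V' openin_subset by blast
    have "h' ` h ` M = M" using inv1 Mt by (force simp: image_image)
    moreover have "h' ` h ` U = U" using inv1 Ut by (force simp: image_image)
    ultimately show "\<exists>V. openin (prod_topology X Y) V \<and> connectedin (prod_topology X Y) V \<and> M \<subseteq> V \<and> V \<subseteq> U"
      using V' homeomorphic_map_openness[OF hm' V't] homeomorphic_map_connectedness[OF hm' V't]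
      by (metis image_mono)
  qed
qed



lemma cis_eq_1_int: "cis x = 1 \<Longrightarrow> \<exists>k::int. x = 2 * pi * of_int k"
proof -
  assume "cis x = 1"
  then have "exp (\<i> * complex_of_real x) = 1" by (simp add: cis_conv_exp)
  then obtain k :: int where "Im (\<i> * complex_of_real x) = of_int (2 * k) * pi"
    using exp_eq_1 by blast
  then show ?thesis by (intro exI[of _ k]) simp
qed

locale sol =
  fixes n :: "nat \<Rightarrow> nat"
  assumes n2: "\<And>i. n i \<ge> 2"
begin

definition Sol :: "(nat \<Rightarrow> complex) set" where
  "Sol = {z. \<forall>i. z i \<in> sphere 0 1 \<and> z i = (z (Suc i)) ^ (n i)}"
definition Nn :: "nat \<Rightarrow> nat" where "Nn i = (\<Prod>k<i. n k)"
definition Pw :: "nat \<Rightarrow> nat \<Rightarrow> nat" where "Pw l i = (\<Prod>k\<in>{i..<l}. n k)"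
definition phi :: "real \<Rightarrow> (nat \<Rightarrow> complex) \<Rightarrow> (nat \<Rightarrow> complex)" where
  "phi r s = (\<lambda>i. s i * cis (2 * pi * r / real (Nn i)))"

lemma npos: "n i > 0" using n2[of i] by linarith

lemma Nn_Suc: "Nn (Suc i) = Nn i * n i" by (simp add: Nn_def)
lemma Nn_pos: "Nn i > 0" by (simp add: Nn_def npos)
lemma Nn_ge: "Nn i \<ge> 2 ^ i"
proof (induction i)
  case 0 then show ?case by (simp add: Nn_def)
next
  case (Suc i)
  then show ?case using mult_le_mono[OF Suc.IH n2[of i]] by (simp add: Nn_Suc mult.commute)
qed

lemma Pw_refl [simp]: "Pw i i = 1" by (simp add: Pw_def)
lemma Pw_Suc: "i \<le> l \<Longrightarrow> Pw (Suc l) i = Pw l i * n l"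
  by (simp add: Pw_def prod.atLeastLessThan_Suc)
lemma Pw_pos: "Pw l i > 0" by (simp add: Pw_def npos)
lemma Nn_Pw: "i \<le> l \<Longrightarrow> Nn l = Nn i * Pw l i"
proof (induction l)
  case 0 then show ?case by simp
next
  case (Suc l)
  show ?case
  proof (cases "i = Suc l")
    case True then show ?thesis by simp
  next
    case False
    then have "i \<le> l" using Suc.prems by simp
    then show ?thesis using Suc.IH by (simp add: Nn_Suc Pw_Suc)
  qed
qed
lemma Pw_trans: "i \<le> k \<Longrightarrow> k \<le> l \<Longrightarrow> Pw l i = Pw k i * Pw l k"
proof -
  assume a: "i \<le> k" "k \<le> l"
  have "Nn l = Nn i * Pw l i" by (rule Nn_Pw) (use a in simp)
  moreover have "Nn l = Nn k * Pw l k" by (rule Nn_Pw) (use a in simp)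
  moreover have "Nn k = Nn i * Pw k i" by (rule Nn_Pw) (use a in simp)
  ultimately have "Nn i * Pw l i = Nn i * (Pw k i * Pw l k)" by (metis mult.assoc)
  then show ?thesis using Nn_pos[of i] by (metis mult_left_cancel not_gr0)
qed

lemma SolD': "s \<in> Sol \<Longrightarrow> norm (s i) = 1 \<and> s i = s (Suc i) ^ n i"
proof -
  assume "s \<in> Sol"
  then have "\<forall>i. s i \<in> sphere 0 1 \<and> s i = s (Suc i) ^ n i" unfolding Sol_def by (rule CollectD)
  then have "s i \<in> sphere 0 1 \<and> s i = s (Suc i) ^ n i" by (rule spec)
  then show ?thesis using mem_sphere_0 by blast
qed
lemma SolD: "s \<in> Sol \<Longrightarrow> norm (s i) = 1" "s \<in> Sol \<Longrightarrow> s i = s (Suc i) ^ n i"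
  using SolD' by blast+
lemma Sol_nz: "s \<in> Sol \<Longrightarrow> s i \<noteq> 0" using SolD(1)[of s i] by auto

lemma Sol_pow: "s \<in> Sol \<Longrightarrow> i \<le> l \<Longrightarrow> s i = s l ^ Pw l i"
proof (induction l)
  case 0 then show ?case by simp
next
  case (Suc l)
  show ?case
  proof (cases "i = Suc l")
    case True then show ?thesis by simp
  next
    case False
    then have "i \<le> l" using Suc.prems by simp
    then have "s i = s l ^ Pw l i" using Suc.IH Suc.prems(1) by blast
    also have "\<dots> = (s (Suc l) ^ n l) ^ Pw l i" using SolD(2)[OF Suc.prems(1), of l] by simp
    also have "\<dots> = s (Suc l) ^ (Pw l i * n l)" by (metis power_mult mult.commute)
    finally show ?thesis using Pw_Suc[OF \<open>i \<le> l\<close>] by simp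
  qed
qed

lemma Sol_eq_lower: "s \<in> Sol \<Longrightarrow> s' \<in> Sol \<Longrightarrow> s l = s' l \<Longrightarrow> i \<le> l \<Longrightarrow> s i = s' i"
  using Sol_pow[of s i l] Sol_pow[of s' i l] by simp

lemma Sol_eqI: "s \<in> Sol \<Longrightarrow> s' \<in> Sol \<Longrightarrow> (\<And>l. l \<ge> j \<Longrightarrow> s l = s' l) \<Longrightarrow> s = s'"
proof
  fix i assume a: "s \<in> Sol" "s' \<in> Sol" "\<And>l. l \<ge> j \<Longrightarrow> s l = s' l"
  show "s i = s' i" using Sol_eq_lower[OF a(1,2) a(3)[of "max i j"]] by simp
qed

lemma phi_apply: "phi r s i = s i * cis (2 * pi * r / real (Nn i))" by (simp add: phi_def)

lemma phi_0 [simp]: "phi 0 s = s" by (simp add: phi_def)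

lemma phi_add: "phi a (phi b s) = phi (a + b) s"
  by (simp add: phi_def cis_mult mult.assoc add_divide_distrib distrib_left add_ac)

lemma phi_Sol: assumes "s \<in> Sol" shows "phi r s \<in> Sol"
proof -
  have "phi r s i = phi r s (Suc i) ^ n i" for i
  proof -
    have e: "real (n i) * (2 * pi * r / real (Nn (Suc i))) = 2 * pi * r / real (Nn i)"
      using npos[of i] Nn_pos[of i] by (simp add: Nn_Suc field_simps)
    have c: "cis (2 * pi * r / real (Nn (Suc i))) ^ n i = cis (2 * pi * r / real (Nn i))"
      unfolding Complex.DeMoivre e ..
    have "phi r s (Suc i) ^ n i = s (Suc i) ^ n i * cis (2 * pi * r / real (Nn (Suc i))) ^ n i"
      unfolding phi_apply by (rule power_mult_distrib)
    also have "\<dots> = s i * cis (2 * pi * r / real (Nn i))" unfolding c SolD(2)[OF assms, of i, symmetric] ..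
    also have "\<dots> = phi r s i" unfolding phi_apply ..
    finally show ?thesis ..
  qed
  moreover have "norm (phi r s i) = 1" for i
    unfolding phi_apply norm_mult using SolD(1)[OF assms, of i] by simp
  ultimately show ?thesis unfolding Sol_def mem_sphere_0 by blast
qed

lemma phi_Nn_int: assumes "i \<le> l" shows "phi (real (Nn l) * of_int c) s i = s i"
proof -
  have "2 * pi * (real (Nn l) * of_int c) / real (Nn i) = 2 * pi * of_int (int (Pw l i) * c)"
    using Nn_Pw[OF assms] Nn_pos[of i] by (simp add: field_simps)
  then show ?thesis by (simp add: phi_def)
qed

lemma phi_level: assumes "i \<le> l"
  shows "phi r s i = s i * cis (2 * pi * (r / real (Nn l)) * real (Pw l i))"
proof -
  have "2 * pi * r / real (Nn i) = 2 * pi * (r / real (Nn l)) * real (Pw l i)"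
    using Nn_Pw[OF assms] Nn_pos[of i] Pw_pos[of l i] by (simp add: field_simps)
  then show ?thesis by (simp add: phi_def)
qed

lemma phi_fix: assumes "s \<in> Sol" "phi r s = s" shows "r = 0"
proof -
  obtain i where i: "\<bar>r\<bar> < 2 ^ i" using real_arch_pow[of 2 "\<bar>r\<bar>"] by auto
  have "s i * cis (2 * pi * r / real (Nn i)) = s i" using assms(2) by (metis phi_apply)
  then have "cis (2 * pi * r / real (Nn i)) = 1" using Sol_nz[OF assms(1)] by simp
  then obtain k :: int where k: "2 * pi * r / real (Nn i) = 2 * pi * of_int k" using cis_eq_1_int by blast
  then have rk: "r = real (Nn i) * of_int k" using Nn_pos[of i] by (simp add: field_simps)
  have "(2::real) ^ i \<le> real (Nn i)" using Nn_ge[of i] by (metis of_nat_le_iff of_nat_numeral of_nat_power)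
  then have "\<bar>r\<bar> < real (Nn i)" using i by linarith
  then have "\<bar>real (Nn i) * of_int k\<bar> < real (Nn i)" using rk by simp
  then have "\<bar>of_int k :: real\<bar> < 1" using Nn_pos[of i] by (simp add: abs_mult)
  then have "k = 0" by linarith
  then show ?thesis using rk by simp
qed

lemma phi_inj: assumes "s \<in> Sol" "phi r s = phi r' s" shows "r = r'"
proof -
  have "phi (r - r') s = phi (-r') (phi r s)" by (simp add: phi_add)
  also have "\<dots> = s" using assms(2) by (simp add: phi_add)
  finally have "r - r' = 0" by (rule phi_fix[OF assms(1)])
  then show ?thesis by simp
qed

lemma cont_phi: "continuous_on UNIV (\<lambda>p::real \<times> (nat \<Rightarrow> complex). phi (fst p) (snd p))"
proof -
  have "continuous_on UNIV (\<lambda>p::real \<times> (nat \<Rightarrow> complex). snd p i * cis (2 * pi * fst p / real (Nn i)))" for i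
  proof -
    have c1: "continuous_on UNIV (\<lambda>p::real \<times> (nat \<Rightarrow> complex). snd p i)"
      by (rule continuous_on_product_then_coordinatewise[OF continuous_on_snd[OF continuous_on_id]])
    have c2: "continuous_on UNIV (\<lambda>p::real \<times> (nat \<Rightarrow> complex). cis (2 * pi * fst p / real (Nn i)))"
      unfolding cis_conv_exp using Nn_pos[of i] by (intro continuous_intros) simp
    show ?thesis by (intro continuous_on_mult c1 c2)
  qed
  then show ?thesis unfolding phi_def by (intro continuous_on_coordinatewise_then_product) simp
qed

end


lemma isCont_eps: "isCont f a \<Longrightarrow> r > 0 \<Longrightarrow> \<exists>s>0. \<forall>x. norm (x - a) < s \<longrightarrow> norm (f x - f a) < r"
  for f :: "'a::real_normed_vector \<Rightarrow> 'b::real_normed_vector"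
proof -
  assume c: "isCont f a" and r: "r > 0"
  then obtain s where s: "s > 0" "\<forall>x. x \<noteq> a \<and> norm (x - a) < s \<longrightarrow> norm (f x - f a) < r"
    unfolding isCont_def LIM_eq by blast
  show ?thesis
  proof (intro exI conjI allI impI)
    fix x assume "norm (x - a) < s"
    then show "norm (f x - f a) < r" using s r by (cases "x = a") auto
  qed (rule s)
qed

lemma cis_small: "\<epsilon> > 0 \<Longrightarrow> \<exists>\<eta>>0. \<forall>x. \<bar>x\<bar> < \<eta> \<longrightarrow> norm (cis x - 1) < \<epsilon>"
proof -
  assume e: "\<epsilon> > 0"
  have "isCont (\<lambda>x::real. cis x) 0" unfolding cis_conv_exp by (intro continuous_intros)
  from isCont_eps[OF this e] show ?thesis by simp
qed

lemma unit_arg: assumes "\<eta> > 0"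
  shows "\<exists>\<delta>>0. \<forall>u. norm u = 1 \<longrightarrow> norm (u - 1) < \<delta> \<longrightarrow> (\<exists>\<theta>. \<bar>\<theta>\<bar> < \<eta> \<and> u = cis (2 * pi * \<theta>))"
proof -
  have "isCont Ln 1" by (rule continuous_at_Ln) (simp add: nonpos_Reals_def)
  from isCont_eps[OF this, of "2 * pi * \<eta>"] assms
  obtain d where d: "d > 0" "\<forall>x. norm (x - 1) < d \<longrightarrow> norm (Ln x) < 2 * pi * \<eta>" by auto
  show ?thesis
  proof (rule exI[of _ d], rule conjI[OF d(1)], intro allI impI)
    fix u :: complex assume u: "norm u = 1" "norm (u - 1) < d"
    then have u0: "u \<noteq> 0" by auto
    have L: "norm (Ln u) < 2 * pi * \<eta>" using d u by blast
    have re: "Re (Ln u) = 0" using u0 u by simp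
    have "Ln u = \<i> * complex_of_real (Im (Ln u))" using re by (simp add: complex_eq_iff)
    then have "u = cis (Im (Ln u))" using exp_Ln[OF u0] by (metis cis_conv_exp)
    then have "u = cis (2 * pi * (Im (Ln u) / (2 * pi)))" by simp
    moreover have "\<bar>Im (Ln u) / (2 * pi)\<bar> < \<eta>"
      using abs_Im_le_cmod[of "Ln u"] L by (simp add: field_simps abs_divide)
    ultimately show "\<exists>\<theta>. \<bar>\<theta>\<bar> < \<eta> \<and> u = cis (2 * pi * \<theta>)" by blast
  qed
qed

context sol begin

lemma Sol_nbhd:
  assumes T: "open T" "s \<in> T" and s: "s \<in> Sol"
  shows "\<exists>l \<delta>. \<delta> > 0 \<and> (\<forall>s'\<in>Sol. norm (s' l - s l) < \<delta> \<longrightarrow> s' \<in> T)"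
proof -
  have "openin (product_topology (\<lambda>i. euclidean) UNIV) T" using T(1) by (simp add: euclidean_product_topology)
  from product_topology_open_contains_basis[OF this T(2)]
  obtain X where X: "s \<in> Pi\<^sub>E UNIV X" "\<And>i. open (X i)" "finite {i. X i \<noteq> UNIV}" "Pi\<^sub>E UNIV X \<subseteq> T"
    by auto
  define I where "I = {i. X i \<noteq> UNIV}"
  have fI: "finite I" using X(3) I_def by simp
  have "\<forall>i. \<exists>e>0. ball (s i) e \<subseteq> X i"
  proof
    fix i
    have "s i \<in> X i" using X(1) by (auto simp: PiE_iff)
    then show "\<exists>e>0. ball (s i) e \<subseteq> X i" using X(2)[of i] open_contains_ball by blast
  qed
  then obtain e where e: "\<And>i. e i > 0" "\<And>i. ball (s i) (e i) \<subseteq> X i" by metis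
  define l where "l = Max (insert 0 I)"
  define m where "m = Min (insert 1 (e ` I))"
  have m: "m > 0" unfolding m_def using fI e(1) by (subst Min_gr_iff) auto
  have mle: "m \<le> e i" if "i \<in> I" for i unfolding m_def using fI that by (intro Min_le) auto
  have il: "i \<le> l" if "i \<in> I" for i unfolding l_def using fI that by (intro Max_ge) auto
  define \<delta> where "\<delta> = m / real (Nn l)"
  have d: "\<delta> > 0" using m Nn_pos[of l] by (simp add: \<delta>_def)
  show ?thesis
  proof (intro exI[of _ l] exI[of _ \<delta>] conjI ballI impI)
    fix s' assume s': "s' \<in> Sol" "norm (s' l - s l) < \<delta>"
    have "s' i \<in> X i" for i
    proof (cases "i \<in> I")
      case False then show ?thesis by (simp add: I_def)
    next
      case True
      have il': "i \<le> l" using il[OF True] .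
      have "norm (s' i - s i) = norm (s' l ^ Pw l i - s l ^ Pw l i)"
        using Sol_pow[OF s' (1) il'] Sol_pow[OF s il'] by simp
      also have "\<dots> \<le> real (Pw l i) * norm (s' l - s l)"
        by (rule norm_power_diff) (use SolD(1)[OF s'(1)] SolD(1)[OF s] in auto)
      also have "\<dots> \<le> real (Nn l) * norm (s' l - s l)"
      proof (rule mult_right_mono)
        have "Pw l i \<le> Nn l" using Nn_Pw[OF il'] Nn_pos[of i] by simp
        then show "real (Pw l i) \<le> real (Nn l)" by simp
      qed simp
      also have "\<dots> < real (Nn l) * \<delta>" using s'(2) Nn_pos[of l] by simp
      also have "\<dots> = m" using Nn_pos[of l] by (simp add: \<delta>_def)
      also have "\<dots> \<le> e i" using mle[OF True] .
      finally have "s' i \<in> ball (s i) (e i)" by (simp add: dist_norm norm_minus_commute)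
      then show ?thesis using e(2) by blast
    qed
    then have "s' \<in> Pi\<^sub>E UNIV X" by (simp add: PiE_UNIV_domain)
    then show "s' \<in> T" using X(4) by blast
  qed (rule d)
qed

lemma open_coord: "open {p :: real \<times> (nat \<Rightarrow> complex). \<bar>fst p - a\<bar> < d \<and> norm (f (snd p k) - b) < e}"
  if "continuous_on UNIV f" for f :: "complex \<Rightarrow> complex"
proof -
  have c: "continuous_on UNIV (\<lambda>p::real \<times> (nat \<Rightarrow> complex). snd p k)"
    by (rule continuous_on_product_then_coordinatewise[OF continuous_on_snd[OF continuous_on_id]])
  have c2: "continuous_on UNIV (\<lambda>p::real \<times> (nat \<Rightarrow> complex). f (snd p k))"
    using continuous_on_compose[OF c continuous_on_subset[OF that]] by (simp add: o_def)
  show ?thesis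
    by (intro open_Collect_conj open_Collect_less continuous_intros c2)
qed

lemma level:
  assumes M: "compact M" "M \<subseteq> {0..1} \<times> Sol" and U: "openin (top_of_set ({0..1} \<times> Sol)) U" "M \<subseteq> U"
  shows "\<exists>j W. open (W :: (real \<times> complex) set) \<and> M \<subseteq> {x \<in> {0..1} \<times> Sol. (fst x, snd x j) \<in> W}
            \<and> {x \<in> {0..1} \<times> Sol. (fst x, snd x j) \<in> W} \<subseteq> U"
proof -
  obtain U' where U': "open U'" "U = ({0..1} \<times> Sol) \<inter> U'" using U(1) openin_open by blast
  have "\<forall>x\<in>M. \<exists>d. d > 0 \<and> (\<exists>l e. e > 0 \<and> (\<forall>t' s'. \<bar>t' - fst x\<bar> < d \<longrightarrow> s' \<in> Sol \<longrightarrow> norm (s' l - snd x l) < e \<longrightarrow> (t', s') \<in> U'))"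
  proof
    fix x assume x: "x \<in> M"
    then have "x \<in> U'" using U U' by blast
    from open_prod_elim[OF U'(1) this] obtain A B where AB: "open A" "open B" "x \<in> A \<times> B" "A \<times> B \<subseteq> U'" .
    obtain d where d: "d > 0" "ball (fst x) d \<subseteq> A" using AB(1,3) open_contains_ball by (metis mem_Times_iff)
    have sx: "snd x \<in> Sol" using x M(2) by auto
    obtain l e where le: "e > 0" "\<forall>s'\<in>Sol. norm (s' l - snd x l) < e \<longrightarrow> s' \<in> B"
      using Sol_nbhd[OF AB(2) _ sx] AB(3) by (metis mem_Times_iff)
    show "\<exists>d. d > 0 \<and> (\<exists>l e. e > 0 \<and> (\<forall>t' s'. \<bar>t' - fst x\<bar> < d \<longrightarrow> s' \<in> Sol \<longrightarrow> norm (s' l - snd x l) < e \<longrightarrow> (t', s') \<in> U'))"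
    proof (intro exI conjI allI impI)
      fix t' s' assume h: "\<bar>t' - fst x\<bar> < d" "s' \<in> Sol" "norm (s' l - snd x l) < e"
      have "t' \<in> A" using h(1) d(2) by (auto simp: dist_real_def)
      moreover have "s' \<in> B" using le h by blast
      ultimately show "(t', s') \<in> U'" using AB(4) by blast
    qed (use d le in auto)
  qed
  then obtain d where "\<forall>x\<in>M. d x > 0 \<and> (\<exists>l e. e > 0 \<and> (\<forall>t' s'. \<bar>t' - fst x\<bar> < d x \<longrightarrow> s' \<in> Sol \<longrightarrow> norm (s' l - snd x l) < e \<longrightarrow> (t', s') \<in> U'))"
    by (rule bchoice[THEN exE])
  then obtain l where "\<forall>x\<in>M. d x > 0 \<and> (\<exists>e. e > 0 \<and> (\<forall>t' s'. \<bar>t' - fst x\<bar> < d x \<longrightarrow> s' \<in> Sol \<longrightarrow> norm (s' (l x) - snd x (l x)) < e \<longrightarrow> (t', s') \<in> U'))"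
    by (metis (no_types, lifting) bchoice[THEN exE])
  then obtain e where H: "\<And>x. x \<in> M \<Longrightarrow> d x > 0 \<and> e x > 0 \<and> (\<forall>t' s'. \<bar>t' - fst x\<bar> < d x \<longrightarrow> s' \<in> Sol \<longrightarrow> norm (s' (l x) - snd x (l x)) < e x \<longrightarrow> (t', s') \<in> U')"
    by (metis (no_types, lifting) bchoice[THEN exE])
  define Ox where "Ox x = {p :: real \<times> (nat \<Rightarrow> complex). \<bar>fst p - fst x\<bar> < d x \<and> norm (id (snd p (l x)) - snd x (l x)) < e x}" for x
  have "open (Ox x)" for x unfolding Ox_def by (rule open_coord) (simp add: continuous_on_id)
  moreover have "M \<subseteq> (\<Union>x\<in>M. Ox x)"
  proof
    fix x assume "x \<in> M" then show "x \<in> (\<Union>x\<in>M. Ox x)" using H[of x] by (auto simp: Ox_def intro!: bexI[of _ x])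
  qed
  ultimately obtain F where F: "F \<subseteq> M" "finite F" "M \<subseteq> (\<Union>x\<in>F. Ox x)"
    using compactE_image[OF M(1)] by metis
  define j where "j = Max (insert 0 (l ` F))"
  have lj: "l x \<le> j" if "x \<in> F" for x unfolding j_def using F(2) that by (intro Max_ge) auto
  define W where "W = (\<Union>x\<in>F. {p :: real \<times> complex. \<bar>fst p - fst x\<bar> < d x \<and> norm (snd p ^ Pw j (l x) - snd x (l x)) < e x})"
  have "open W" unfolding W_def
  proof (intro open_UN ballI)
    fix x
    show "open {p :: real \<times> complex. \<bar>fst p - fst x\<bar> < d x \<and> norm (snd p ^ Pw j (l x) - snd x (l x)) < e x}"
      by (intro open_Collect_conj open_Collect_less continuous_intros)
  qed
  moreover have "M \<subseteq> {x \<in> {0..1} \<times> Sol. (fst x, snd x j) \<in> W}"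
  proof
    fix y assume y: "y \<in> M"
    then obtain x where x: "x \<in> F" "y \<in> Ox x" using F(3) by blast
    have sy: "snd y \<in> Sol" using y M(2) by auto
    have "snd y (l x) = snd y j ^ Pw j (l x)" using Sol_pow[OF sy lj[OF x(1)]] .
    then have "(fst y, snd y j) \<in> W" using x unfolding W_def Ox_def by auto
    then show "y \<in> {x \<in> {0..1} \<times> Sol. (fst x, snd x j) \<in> W}" using y M(2) by auto
  qed
  moreover have "{x \<in> {0..1} \<times> Sol. (fst x, snd x j) \<in> W} \<subseteq> U"
  proof
    fix y assume y: "y \<in> {x \<in> {0..1} \<times> Sol. (fst x, snd x j) \<in> W}"
    then obtain x where x: "x \<in> F" "\<bar>fst y - fst x\<bar> < d x" "norm (snd y j ^ Pw j (l x) - snd x (l x)) < e x"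
      unfolding W_def by auto
    have sy: "snd y \<in> Sol" using y by auto
    have "snd y (l x) = snd y j ^ Pw j (l x)" using Sol_pow[OF sy lj[OF x(1)]] .
    moreover have xM: "x \<in> M" using F(1) x(1) by blast
    ultimately have "(fst y, snd y) \<in> U'" using H[OF xM] x(2,3) sy by metis
    then show "y \<in> U" using y U' by auto
  qed
  ultimately show ?thesis by blast
qed

end


context sol begin

lemma phi_shift: "phi (r + d) s i = phi r s i * cis (2 * pi * d / real (Nn i))"
  by (simp add: phi_apply cis_mult add_divide_distrib distrib_left mult.assoc)

lemma phi_shift_Nn: "i \<le> l \<Longrightarrow> phi (r + real (Nn l) * of_int c) s i = phi r s i"
proof -
  assume "i \<le> l"
  have "phi (r + real (Nn l) * of_int c) s = phi (real (Nn l) * of_int c) (phi r s)"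
    by (simp add: phi_add add.commute)
  then show ?thesis using phi_Nn_int[OF \<open>i \<le> l\<close>] by simp
qed

lemma cis_pow: "cis a ^ m = cis (real m * a)" by (rule Complex.DeMoivre)

lemma unit_cis: "norm u = 1 \<Longrightarrow> \<exists>\<theta>. u = cis (2 * pi * \<theta>)"
proof -
  assume u: "norm u = 1"
  then have u0: "u \<noteq> 0" by auto
  have re: "Re (Ln u) = 0" using u0 u by simp
  have "Ln u = \<i> * complex_of_real (Im (Ln u))" using re by (simp add: complex_eq_iff)
  then have "u = cis (Im (Ln u))" using exp_Ln[OF u0] by (metis cis_conv_exp)
  then have "u = cis (2 * pi * (Im (Ln u) / (2 * pi)))" by simp
  then show ?thesis by blast
qed

end

locale main = sol +
  fixes M :: "(real \<times> (nat \<Rightarrow> complex)) set" and j :: nat and W :: "(real \<times> complex) set"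
    and t0 :: real and s0 :: "nat \<Rightarrow> complex"
  assumes Mc: "compact M" and Mconn: "connected M" and MX: "M \<subseteq> {0..1} \<times> Sol"
    and Mproj: "snd ` M = Sol" and Wo: "open W"
    and MV: "M \<subseteq> {x \<in> {0..1} \<times> Sol. (fst x, snd x j) \<in> W}"
    and x0: "(t0, s0) \<in> M"
begin

definition "Xs = {0..1::real} \<times> Sol"
definition "V0 = {x \<in> Xs. (fst x, snd x j) \<in> W}"
definition "Wt = {p :: real \<times> real. fst p \<in> {0..1} \<and> (fst p, phi (snd p) s0 j) \<in> W}"
definition "At = path_component_set Wt (t0, 0)"
definition "E (p :: real \<times> real) = (fst p, phi (snd p) s0)"
definition "A = E ` At"
definition "K = {k :: int. (t0, real (Nn j) * of_int k) \<in> At}"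
definition "Vl l = {y \<in> V0. \<exists>a\<in>A. fst a = fst y \<and> snd a l = snd y l}"

lemma MV0: "M \<subseteq> V0" using MV by (simp add: V0_def Xs_def)
lemma s0: "s0 \<in> Sol" and t0: "t0 \<in> {0..1}" and t0W: "(t0, s0 j) \<in> W"
  using x0 MX MV by auto

lemma At_Wt: "p \<in> At \<Longrightarrow> p \<in> Wt" unfolding At_def by (simp add: path_component_mem(2))

lemma t0At: "(t0, 0) \<in> At"
proof -
  have "(t0, 0) \<in> Wt" using t0 t0W by (simp add: Wt_def)
  then show ?thesis unfolding At_def by (simp add: path_component_refl)
qed

lemma E_Xs: "p \<in> Wt \<Longrightarrow> E p \<in> V0"
  using phi_Sol[OF s0] by (auto simp: E_def Wt_def V0_def Xs_def)

lemma A_V0: "A \<subseteq> V0" using E_Xs At_Wt by (auto simp: A_def)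

lemma x0A: "(t0, s0) \<in> A"
  using t0At unfolding A_def E_def by (force intro: image_eqI[of _ _ "(t0, 0)"])

lemma cont_E: "continuous_on UNIV E"
proof -
  have c0: "continuous_on UNIV (\<lambda>p::real\<times>real. (snd p, s0))" by (intro continuous_intros)
  have "continuous_on UNIV ((\<lambda>q. phi (fst q) (snd q)) \<circ> (\<lambda>p::real\<times>real. (snd p, s0)))"
    by (rule continuous_on_compose[OF c0 continuous_on_subset[OF cont_phi]]) simp
  then have c: "continuous_on UNIV (\<lambda>p::real \<times> real. phi (snd p) s0)" by (simp add: o_def)
  show ?thesis unfolding E_def[abs_def] by (rule continuous_on_Pair[OF continuous_on_fst[OF continuous_on_id] c])
qed

lemma A_connected: "connected A"
proof -
  have "path_connected At" unfolding At_def by simp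
  then have "path_connected A" unfolding A_def
    using path_connected_continuous_image continuous_on_subset[OF cont_E subset_UNIV] by blast
  then show ?thesis by (rule path_connected_imp_connected)
qed

lemma Wt_shift: "p \<in> Wt \<Longrightarrow> p + (0, real (Nn j) * of_int k) \<in> Wt"
  using phi_shift_Nn[of j j "snd p" k s0] by (simp add: Wt_def)

lemma pc_shift:
  assumes "path_component Wt p q"
  shows "path_component Wt (p + (0, real (Nn j) * of_int k)) (q + (0, real (Nn j) * of_int k))"
proof -
  obtain g where g: "path g" "path_image g \<subseteq> Wt" "pathstart g = p" "pathfinish g = q"
    using assms unfolding path_component_def by blast
  define h where "h u = g u + (0, real (Nn j) * of_int k)" for u
  have "path h" using g(1) unfolding h_def path_def by (intro continuous_intros)
  moreover have "path_image h \<subseteq> Wt"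
  proof
    fix z assume "z \<in> path_image h"
    then obtain u where u: "u \<in> {0..1}" "z = h u" by (auto simp: path_image_def)
    then have "g u \<in> Wt" using g(2) by (auto simp: path_image_def)
    then show "z \<in> Wt" using u(2) h_def by (metis Wt_shift)
  qed
  ultimately show ?thesis using g(3,4) unfolding path_component_def h_def pathstart_def pathfinish_def by blast
qed

lemma TR': assumes "(t, r) \<in> At" "k \<in> K" shows "(t, r + real (Nn j) * of_int k) \<in> At"
proof -
  have "path_component Wt (t0, 0) (t, r)" using assms(1) by (simp add: At_def)
  from pc_shift[OF this, of k]
  have "path_component Wt (t0, real (Nn j) * of_int k) (t, r + real (Nn j) * of_int k)" by simp
  moreover have "path_component Wt (t0, 0) (t0, real (Nn j) * of_int k)" using assms(2) by (simp add: K_def At_def)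
  ultimately show ?thesis unfolding At_def using path_component_trans by (metis mem_Collect_eq)
qed

lemma TR: assumes "(t, r) \<in> At" "(t, r + real (Nn j) * of_int k) \<in> At" shows "k \<in> K"
proof -
  have "path_component Wt (t, r) (t0, 0)" using assms(1) by (simp add: At_def path_component_sym)
  from pc_shift[OF this, of k]
  have "path_component Wt (t, r + real (Nn j) * of_int k) (t0, real (Nn j) * of_int k)" by simp
  moreover have "path_component Wt (t0, 0) (t, r + real (Nn j) * of_int k)" using assms(2) by (simp add: At_def)
  ultimately show ?thesis unfolding K_def At_def using path_component_trans by (metis mem_Collect_eq)
qed

lemma K0: "0 \<in> K" using t0At by (simp add: K_def)

lemma K_add: "k \<in> K \<Longrightarrow> k' \<in> K \<Longrightarrow> k + k' \<in> K"
  using TR'[of t0 "real (Nn j) * of_int k" k'] by (simp add: K_def distrib_left)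

lemma K_neg: assumes "k \<in> K" shows "- k \<in> K"
proof -
  have "(t0, - (real (Nn j) * of_int k)) \<in> Wt" using Wt_shift[of "(t0,0)" "-k"] At_Wt[OF t0At] by simp
  have "path_component Wt (t0, 0) (t0, real (Nn j) * of_int k)" using assms by (simp add: K_def At_def)
  from pc_shift[OF this, of "-k"]
  have "path_component Wt (t0, - (real (Nn j) * of_int k)) (t0, 0)" by simp
  then show ?thesis unfolding K_def At_def by (simp add: path_component_sym)
qed

lemma K_mult_nat: "k \<in> K \<Longrightarrow> int m * k \<in> K"
  by (induction m) (auto simp: K0 distrib_right intro: K_add)

lemma K_mult: assumes "k \<in> K" shows "u * k \<in> K"
proof (cases "u \<ge> 0")
  case True
  then show ?thesis using K_mult_nat[OF assms, of "nat u"] by simp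
next
  case False
  then have "- (int (nat (-u)) * k) \<in> K" using K_neg K_mult_nat[OF assms, of "nat (-u)"] by blast
  then show ?thesis using False by simp
qed

end


context sol begin
lemma Nn_ratio: "j \<le> l \<Longrightarrow> real (Nn l) = real (Nn j) * real (Pw l j)"
  using Nn_Pw[of j l] by simp
end

context main begin

lemma dist_pair_le: "dist (a::real, b::complex) (c, d) \<le> \<bar>a - c\<bar> + norm (b - d)"
  using norm_Pair_le[of "a - c" "b - d"] by (simp add: dist_norm)

lemma LOC:
  assumes y: "y \<in> V0" and l: "j \<le> l" and z: "\<zeta> > 0"
  shows "\<exists>\<epsilon>>0. \<exists>\<delta>>0. \<forall>t' s'. t' \<in> {0..1} \<longrightarrow> \<bar>t' - fst y\<bar> < \<epsilon> \<longrightarrow> s' \<in> Sol \<longrightarrow> norm (s' l - snd y l) < \<delta> \<longrightarrow>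
     (\<exists>\<theta>. \<bar>\<theta>\<bar> < \<zeta> \<and> s' l = snd y l * cis (2 * pi * \<theta>) \<and> (t', s' j) \<in> W \<and>
        (\<forall>r. phi r s0 j = snd y j \<longrightarrow> path_component Wt (fst y, r) (t', r + real (Nn l) * \<theta>)))"
proof -
  obtain t s where ts: "y = (t, s)" by (cases y)
  have t: "t \<in> {0..1}" "s \<in> Sol" "(t, s j) \<in> W" using y ts by (auto simp: V0_def Xs_def)
  obtain e0 where e0: "e0 > 0" "ball (t, s j) e0 \<subseteq> W" using Wo t(3) open_contains_ball by blast
  obtain \<eta>' where \<eta>': "\<eta>' > 0" "\<forall>x. \<bar>x\<bar> < \<eta>' \<longrightarrow> norm (cis x - 1) < e0/2"
    using cis_small[of "e0/2"] e0 by auto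
  define P where "P = real (Pw l j)"
  have P1: "P \<ge> 1" using Pw_pos[of l j] by (simp add: P_def)
  define \<eta> where "\<eta> = min \<zeta> (\<eta>' / (2 * pi * P))"
  have \<eta>: "\<eta> > 0" using z \<eta>' P1 by (simp add: \<eta>_def)
  obtain \<delta> where \<delta>: "\<delta> > 0" "\<forall>u. norm u = 1 \<longrightarrow> norm (u - 1) < \<delta> \<longrightarrow> (\<exists>\<theta>. \<bar>\<theta>\<bar> < \<eta> \<and> u = cis (2 * pi * \<theta>))"
    using unit_arg[OF \<eta>] by auto
  have ns: "norm (s i) = 1" for i using SolD(1)[OF t(2)] .
  have key: "(t'', s j * cis x) \<in> W" if "\<bar>t'' - t\<bar> < e0/2" "\<bar>x\<bar> < \<eta>'" for t'' x
  proof -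
    have "norm (s j * cis x - s j) = norm (s j * (cis x - 1))" by (simp add: right_diff_distrib)
    also have "\<dots> = norm (cis x - 1)" by (simp add: norm_mult ns)
    finally have "norm (s j * cis x - s j) < e0/2" using \<eta>' that(2) by simp
    then have "dist (t'', s j * cis x) (t, s j) < e0" using dist_pair_le[of t'' "s j * cis x" t "s j"] that(1) by simp
    then show ?thesis using e0(2) by (auto simp: dist_commute)
  qed
  show ?thesis
  proof (rule exI[of _ "e0/2"], rule conjI, simp add: e0, rule exI[of _ \<delta>], rule conjI[OF \<delta>(1)], intro allI impI)
    fix t' s' assume h: "t' \<in> {0..1}" "\<bar>t' - fst y\<bar> < e0/2" "s' \<in> Sol" "norm (s' l - snd y l) < \<delta>"
    define u where "u = s' l / s l"
    have nu: "norm u = 1" using SolD(1)[OF h(3)] ns by (simp add: u_def norm_divide)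
    have "u - 1 = (s' l - s l) / s l" using Sol_nz[OF t(2)] by (simp add: u_def field_simps)
    then have "norm (u - 1) < \<delta>" using h(4) ts ns by (simp add: norm_divide)
    then obtain \<theta> where \<theta>: "\<bar>\<theta>\<bar> < \<eta>" "u = cis (2 * pi * \<theta>)" using \<delta>(2) nu by blast
    have s'l: "s' l = s l * cis (2 * pi * \<theta>)" using \<theta>(2) Sol_nz[OF t(2)] by (simp add: u_def field_simps)
    have xs: "\<bar>P * (2 * pi * \<theta>)\<bar> < \<eta>'"
    proof -
      have "\<bar>P * (2 * pi * \<theta>)\<bar> = P * (2 * pi) * \<bar>\<theta>\<bar>" using P1 by (simp add: abs_mult)
      also have "\<dots> < P * (2 * pi) * (\<eta>' / (2 * pi * P))"
        using \<theta>(1) P1 by (intro mult_strict_left_mono) (auto simp: \<eta>_def)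
      also have "\<dots> = \<eta>'" using P1 by simp
      finally show ?thesis .
    qed
    have s'j: "s' j = s j * cis (P * (2 * pi * \<theta>))"
    proof -
      have "s' j = s' l ^ Pw l j" using Sol_pow[OF h(3) l] .
      also have "\<dots> = s l ^ Pw l j * cis (2 * pi * \<theta>) ^ Pw l j" by (simp add: s'l power_mult_distrib)
      also have "\<dots> = s j * cis (P * (2 * pi * \<theta>))" using Sol_pow[OF t(2) l] by (simp add: cis_pow P_def)
      finally show ?thesis .
    qed
    have W': "(t', s' j) \<in> W" using key[OF _ xs] h(2) ts s'j by simp
    have pc: "path_component Wt (t, r) (t', r + real (Nn l) * \<theta>)" if r: "phi r s0 j = s j" for r
    proof (rule path_component_linepath, rule subsetI)
      fix p assume "p \<in> closed_segment (t, r) (t', r + real (Nn l) * \<theta>)"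
      then obtain v where v: "0 \<le> v" "v \<le> 1" "p = (1 - v) *\<^sub>R (t, r) + v *\<^sub>R (t', r + real (Nn l) * \<theta>)"
        by (auto simp: in_segment)
      have p1: "fst p = (1 - v) * t + v * t'" and p2: "snd p = r + v * (real (Nn l) * \<theta>)"
        using v(3) by (auto simp: algebra_simps)
      have fp: "fst p \<in> {0..1}"
      proof -
        have "0 \<le> (1 - v) * t + v * t'" using t(1) h(1) v by simp
        moreover have "(1 - v) * t + v * t' \<le> (1 - v) * 1 + v * 1"
          using t(1) h(1) v by (intro add_mono mult_left_mono) auto
        ultimately show ?thesis using p1 by simp
      qed
      have fpt: "\<bar>fst p - t\<bar> < e0/2"
      proof -
        have "fst p - t = v * (t' - t)" using p1 by (simp add: algebra_simps)
        then have "\<bar>fst p - t\<bar> = v * \<bar>t' - t\<bar>" using v by (simp add: abs_mult)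
        also have "\<dots> \<le> \<bar>t' - t\<bar>" using v by (simp add: mult_left_le_one_le)
        finally show ?thesis using h(2) ts by simp
      qed
      have "phi (snd p) s0 j = phi r s0 j * cis (2 * pi * (v * (real (Nn l) * \<theta>)) / real (Nn j))"
        unfolding p2 by (rule phi_shift)
      also have "2 * pi * (v * (real (Nn l) * \<theta>)) / real (Nn j) = v * (P * (2 * pi * \<theta>))"
        using Nn_ratio[OF l] Nn_pos[of j] by (simp add: P_def field_simps)
      finally have ph: "phi (snd p) s0 j = s j * cis (v * (P * (2 * pi * \<theta>)))" using r by simp
      have "\<bar>v * (P * (2 * pi * \<theta>))\<bar> < \<eta>'"
      proof -
        have "\<bar>v * (P * (2 * pi * \<theta>))\<bar> \<le> \<bar>P * (2 * pi * \<theta>)\<bar>" using v by (simp add: abs_mult mult_left_le_one_le)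
        then show ?thesis using xs by linarith
      qed
      then have "(fst p, phi (snd p) s0 j) \<in> W" using key[OF fpt] ph by simp
      then show "p \<in> Wt" using fp by (simp add: Wt_def)
    qed
    show "\<exists>\<theta>. \<bar>\<theta>\<bar> < \<zeta> \<and> s' l = snd y l * cis (2 * pi * \<theta>) \<and> (t', s' j) \<in> W \<and>
        (\<forall>r. phi r s0 j = snd y j \<longrightarrow> path_component Wt (fst y, r) (t', r + real (Nn l) * \<theta>))"
      using \<theta>(1) s'l W' pc ts by (intro exI[of _ \<theta>]) (auto simp: \<eta>_def)
  qed
qed

end


context main begin

lemma A_E: assumes "a \<in> A" obtains r where "(fst a, r) \<in> At" "a = E (fst a, r)" "snd a = phi r s0"
  using assms unfolding A_def E_def by (auto simp: image_iff)

lemma A_Sol: "a \<in> A \<Longrightarrow> snd a \<in> Sol" using A_V0 by (auto simp: V0_def Xs_def)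

lemma Oy_open: "open {p :: real \<times> (nat \<Rightarrow> complex). \<bar>fst p - a\<bar> < d \<and> norm (id (snd p k) - b) < e}"
  by (rule open_coord) (simp add: continuous_on_id)

lemma L_equiv:
  assumes y: "y \<in> V0" and l: "j \<le> l"
  shows "\<exists>Ob. open Ob \<and> y \<in> Ob \<and> (\<forall>y' \<in> Ob \<inter> Xs. y' \<in> V0 \<and> (y \<in> Vl l \<longleftrightarrow> y' \<in> Vl l))"
proof -
  obtain \<epsilon> \<delta> where ed: "\<epsilon> > 0" "\<delta> > 0" "\<forall>t' s'. t' \<in> {0..1} \<longrightarrow> \<bar>t' - fst y\<bar> < \<epsilon> \<longrightarrow> s' \<in> Sol \<longrightarrow> norm (s' l - snd y l) < \<delta> \<longrightarrow>
     (\<exists>\<theta>. \<bar>\<theta>\<bar> < 1 \<and> s' l = snd y l * cis (2 * pi * \<theta>) \<and> (t', s' j) \<in> W \<and>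
        (\<forall>r. phi r s0 j = snd y j \<longrightarrow> path_component Wt (fst y, r) (t', r + real (Nn l) * \<theta>)))"
    using LOC[OF y l, of 1] by auto
  define Ob where "Ob = {p :: real \<times> (nat \<Rightarrow> complex). \<bar>fst p - fst y\<bar> < \<epsilon> \<and> norm (id (snd p l) - snd y l) < \<delta>}"
  have sy: "snd y \<in> Sol" using y by (auto simp: V0_def Xs_def)
  show ?thesis
  proof (intro exI[of _ Ob] conjI ballI)
    show "open Ob" unfolding Ob_def by (rule Oy_open)
    show "y \<in> Ob" using ed by (simp add: Ob_def)
  next
    fix y' assume y': "y' \<in> Ob \<inter> Xs"
    obtain t' s' where ts': "y' = (t', s')" by (cases y')
    have h: "t' \<in> {0..1}" "\<bar>t' - fst y\<bar> < \<epsilon>" "s' \<in> Sol" "norm (s' l - snd y l) < \<delta>"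
      using y' ts' by (auto simp: Ob_def Xs_def)
    obtain \<theta> where \<theta>: "s' l = snd y l * cis (2 * pi * \<theta>)" "(t', s' j) \<in> W"
       "\<And>r. phi r s0 j = snd y j \<Longrightarrow> path_component Wt (fst y, r) (t', r + real (Nn l) * \<theta>)"
      using ed(3) h by blast
    have shl: "phi (r + real (Nn l) * \<theta>) s0 l = phi r s0 l * cis (2 * pi * \<theta>)" for r
      using phi_shift[of r "real (Nn l) * \<theta>" s0 l] Nn_pos[of l] by (simp add: mult.assoc)
    show "y' \<in> V0" using \<theta>(2) y' ts' by (simp add: V0_def)
    show "y \<in> Vl l \<longleftrightarrow> y' \<in> Vl l"
    proof
      assume "y \<in> Vl l"
      then obtain a where a: "a \<in> A" "fst a = fst y" "snd a l = snd y l" by (auto simp: Vl_def)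
      obtain r where r: "(fst a, r) \<in> At" "snd a = phi r s0" using A_E[OF a(1)] by metis
      have "phi r s0 j = snd y j" using Sol_eq_lower[OF phi_Sol[OF s0] sy _ l] a(3) r(2) by simp
      then have "path_component Wt (fst y, r) (t', r + real (Nn l) * \<theta>)" using \<theta>(3) by blast
      then have "(t', r + real (Nn l) * \<theta>) \<in> At" using r(1) a(2) unfolding At_def
        by (metis mem_Collect_eq path_component_trans)
      then have "E (t', r + real (Nn l) * \<theta>) \<in> A" by (simp add: A_def)
      moreover have "snd (E (t', r + real (Nn l) * \<theta>)) l = s' l"
        using shl[of r] a(3) r(2) \<theta>(1) by (simp add: E_def)
      ultimately show "y' \<in> Vl l" using \<open>y' \<in> V0\<close> ts' by (force simp: Vl_def E_def)
    next
      assume "y' \<in> Vl l"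
      then obtain a where a: "a \<in> A" "fst a = t'" "snd a l = s' l" using ts' by (auto simp: Vl_def)
      obtain r' where r': "(t', r') \<in> At" "snd a = phi r' s0" using A_E[OF a(1)] a(2) by metis
      define r where "r = r' - real (Nn l) * \<theta>"
      have "phi r' s0 l = phi r s0 l * cis (2 * pi * \<theta>)" using shl[of r] by (simp add: r_def)
      then have "phi r s0 l * cis (2 * pi * \<theta>) = snd y l * cis (2 * pi * \<theta>)" using a(3) r'(2) \<theta>(1) by simp
      then have prl: "phi r s0 l = snd y l" by (simp add: cis_neq_zero)
      then have "phi r s0 j = snd y j" using Sol_eq_lower[OF phi_Sol[OF s0] sy _ l] by simp
      then have "path_component Wt (fst y, r) (t', r + real (Nn l) * \<theta>)" using \<theta>(3) by blast
      then have "path_component Wt (fst y, r) (t', r')" by (simp add: r_def)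
      then have "(fst y, r) \<in> At" using r'(1) unfolding At_def
        by (metis mem_Collect_eq path_component_trans path_component_sym)
      then have "E (fst y, r) \<in> A" by (simp add: A_def)
      moreover have "fst (E (fst y, r)) = fst y \<and> snd (E (fst y, r)) l = snd y l" using prl by (simp add: E_def)
      ultimately show "y \<in> Vl l" using y unfolding Vl_def by blast
    qed
  qed
qed

lemma V0_open: "openin (top_of_set Xs) V0"
proof -
  have "open ((\<lambda>x::real \<times> (nat \<Rightarrow> complex). (fst x, snd x j)) -` W)"
  proof (rule open_vimage[OF Wo])
    have c: "continuous_on UNIV (\<lambda>p::real \<times> (nat \<Rightarrow> complex). snd p j)"
      by (rule continuous_on_product_then_coordinatewise[OF continuous_on_snd[OF continuous_on_id]])
    show "continuous_on UNIV (\<lambda>x::real \<times> (nat \<Rightarrow> complex). (fst x, snd x j))"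
      by (rule continuous_on_Pair[OF continuous_on_fst[OF continuous_on_id] c])
  qed
  moreover have "V0 = Xs \<inter> ((\<lambda>x::real \<times> (nat \<Rightarrow> complex). (fst x, snd x j)) -` W)"
    by (auto simp: V0_def)
  ultimately show ?thesis by (auto simp: openin_open)
qed

lemma Vl_sub: "Vl l \<subseteq> V0" by (auto simp: Vl_def)
lemma V0_sub: "V0 \<subseteq> Xs" by (auto simp: V0_def)

lemma Vl_open: assumes "j \<le> l" shows "openin (top_of_set Xs) (Vl l)"
proof (subst openin_subopen, intro ballI)
  fix y assume y: "y \<in> Vl l"
  then obtain Ob where Ob: "open Ob" "y \<in> Ob" "\<forall>y' \<in> Ob \<inter> Xs. y' \<in> V0 \<and> (y \<in> Vl l \<longleftrightarrow> y' \<in> Vl l)"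
    using L_equiv[OF _ assms] Vl_sub by blast
  show "\<exists>T. openin (top_of_set Xs) T \<and> y \<in> T \<and> T \<subseteq> Vl l"
    using Ob y Vl_sub V0_sub by (intro exI[of _ "Xs \<inter> Ob"]) (auto simp: openin_open)
qed

lemma Vl_co_open: assumes "j \<le> l" shows "openin (top_of_set Xs) (V0 - Vl l)"
proof (subst openin_subopen, intro ballI)
  fix y assume y: "y \<in> V0 - Vl l"
  then obtain Ob where Ob: "open Ob" "y \<in> Ob" "\<forall>y' \<in> Ob \<inter> Xs. y' \<in> V0 \<and> (y \<in> Vl l \<longleftrightarrow> y' \<in> Vl l)"
    using L_equiv[OF _ assms] by blast
  show "\<exists>T. openin (top_of_set Xs) T \<and> y \<in> T \<and> T \<subseteq> V0 - Vl l"
    using Ob y V0_sub by (intro exI[of _ "Xs \<inter> Ob"]) (auto simp: openin_open)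
qed

lemma x0Vl: "(t0, s0) \<in> Vl l"
  using x0 MV0 x0A by (force simp: Vl_def)

lemma M_Vl: assumes "j \<le> l" shows "M \<subseteq> Vl l"
proof -
  obtain Ob1 where Ob1: "open Ob1" "Vl l = Xs \<inter> Ob1" using Vl_open[OF assms] openin_open by metis
  obtain Ob2 where Ob2: "open Ob2" "V0 - Vl l = Xs \<inter> Ob2" using Vl_co_open[OF assms] openin_open by metis
  have MX': "M \<subseteq> Xs" using MV0 V0_sub by blast
  have "M \<subseteq> Ob1 \<union> Ob2" using MV0 Ob1 Ob2 by blast
  moreover have "Ob1 \<inter> Ob2 \<inter> M = {}" using Ob1 Ob2 MX' by blast
  ultimately have "Ob1 \<inter> M = {} \<or> Ob2 \<inter> M = {}" using connectedD[OF Mconn Ob1(1) Ob2(1)] by blast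
  moreover have "(t0, s0) \<in> Ob1 \<inter> M" using x0 x0Vl Ob1 by blast
  ultimately have "Ob2 \<inter> M = {}" by blast
  then show ?thesis using MV0 Ob1 Ob2 MX' by blast
qed

end


context main begin

lemma inj_A:
  assumes K0': "\<forall>k\<in>K. k = 0" and a: "a \<in> A" "a' \<in> A" "fst a = fst a'" "snd a j = snd a' j"
  shows "a = a'"
proof -
  obtain r where r: "(fst a, r) \<in> At" "snd a = phi r s0" using A_E[OF a(1)] by metis
  obtain r' where r': "(fst a, r') \<in> At" "snd a' = phi r' s0" using A_E[OF a(2)] a(3) by metis
  have "s0 j * cis (2 * pi * r / real (Nn j)) = s0 j * cis (2 * pi * r' / real (Nn j))"
    using a(4) r(2) r'(2) by (simp add: phi_apply)
  then have "cis (2 * pi * r / real (Nn j)) = cis (2 * pi * r' / real (Nn j))"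
    using Sol_nz[OF s0] by simp
  then have "cis (2 * pi * r / real (Nn j) - 2 * pi * r' / real (Nn j)) = 1"
    by (metis cis_divide cis_neq_zero divide_self)
  then obtain k :: int where k: "2 * pi * r / real (Nn j) - 2 * pi * r' / real (Nn j) = 2 * pi * of_int k"
    using cis_eq_1_int by blast
  then have "2 * pi * (r - r') = 2 * pi * (real (Nn j) * of_int k)" using Nn_pos[of j] by (simp add: field_simps)
  then have rr: "r = r' + real (Nn j) * of_int k" by (simp add: pi_neq_zero)
  then have "k \<in> K" using TR[OF r'(1)] r(1) by simp
  then have "r = r'" using K0' rr by simp
  then have "snd a = snd a'" using r(2) r'(2) by simp
  then show ?thesis using a(3) by (simp add: prod_eq_iff)
qed

lemma M_A: assumes K0': "\<forall>k\<in>K. k = 0" shows "M \<subseteq> A"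
proof
  fix y assume y: "y \<in> M"
  have "\<forall>l. \<exists>a. j \<le> l \<longrightarrow> a \<in> A \<and> fst a = fst y \<and> snd a l = snd y l"
  proof
    fix l
    show "\<exists>a. j \<le> l \<longrightarrow> a \<in> A \<and> fst a = fst y \<and> snd a l = snd y l"
    proof (cases "j \<le> l")
      case True
      then have "y \<in> Vl l" using M_Vl y by blast
      then show ?thesis unfolding Vl_def by blast
    qed simp
  qed
  then obtain a where a: "\<And>l. j \<le> l \<Longrightarrow> a l \<in> A \<and> fst (a l) = fst y \<and> snd (a l) l = snd y l"
    by metis
  have sy: "snd y \<in> Sol" using y MX by auto
  have eq: "a l = a j" if "j \<le> l" for l
  proof (rule inj_A[OF K0'])
    show "a l \<in> A" "a j \<in> A" using a that by auto
    show "fst (a l) = fst (a j)" using a that by auto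
    have "snd (a l) j = snd y j" using Sol_eq_lower[OF A_Sol sy _ that] a[OF that] by blast
    then show "snd (a l) j = snd (a j) j" using a[of j] by simp
  qed
  have "snd (a j) = snd y"
  proof (rule Sol_eqI[OF A_Sol sy])
    show "a j \<in> A" using a by simp
    fix l assume "j \<le> l"
    then show "snd (a j) l = snd y l" using eq a by metis
  qed
  then have "a j = y" using a[of j] by (simp add: prod_eq_iff)
  then show "y \<in> A" using a[of j] by auto
qed

lemma K_nz: "\<exists>k\<in>K. k \<noteq> 0"
proof (rule ccontr)
  assume "\<not> (\<exists>k\<in>K. k \<noteq> 0)"
  then have K0': "\<forall>k\<in>K. k = 0" by blast
  define sk where "sk k = phi (real (Nn j) * real k) s0" for k :: nat
  have "\<forall>k. \<exists>\<tau>. (\<tau>, sk k) \<in> M"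
  proof
    fix k
    have "sk k \<in> Sol" using phi_Sol[OF s0] by (simp add: sk_def)
    then show "\<exists>\<tau>. (\<tau>, sk k) \<in> M" using Mproj by (metis image_iff prod.collapse)
  qed
  then obtain \<tau> where \<tau>: "\<And>k. (\<tau> k, sk k) \<in> M" by metis
  define f where "f k = (\<tau> k, sk k)" for k
  have "inj f"
  proof
    fix k k' assume "f k = f k'"
    then have "sk k = sk k'" by (simp add: f_def)
    then have "real (Nn j) * real k = real (Nn j) * real k'" unfolding sk_def by (rule phi_inj[OF s0])
    then show "k = k'" using Nn_pos[of j] by simp
  qed
  then have infT: "infinite (range f)" by (rule range_inj_infinite)
  have TM: "range f \<subseteq> M" using \<tau> by (auto simp: f_def)
  obtain y where y: "y \<in> M" "y islimpt range f"
    using Heine_Borel_imp_Bolzano_Weierstrass[OF Mc infT TM] by blast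
  have yA: "y \<in> A" using M_A[OF K0'] y(1) by blast
  then have yV0: "y \<in> V0" using A_V0 by blast
  obtain \<rho> where \<rho>: "(fst y, \<rho>) \<in> At" "snd y = phi \<rho> s0" using A_E[OF yA] by metis
  obtain \<epsilon> \<delta> where ed: "\<epsilon> > 0" "\<delta> > 0" "\<forall>t' s'. t' \<in> {0..1} \<longrightarrow> \<bar>t' - fst y\<bar> < \<epsilon> \<longrightarrow> s' \<in> Sol \<longrightarrow> norm (s' j - snd y j) < \<delta> \<longrightarrow>
     (\<exists>\<theta>. \<bar>\<theta>\<bar> < 1/2 \<and> s' j = snd y j * cis (2 * pi * \<theta>) \<and> (t', s' j) \<in> W \<and>
        (\<forall>r. phi r s0 j = snd y j \<longrightarrow> path_component Wt (fst y, r) (t', r + real (Nn j) * \<theta>)))"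
    using LOC[OF yV0 order_refl, of "1/2"] by auto
  define Ob where "Ob = {p :: real \<times> (nat \<Rightarrow> complex). \<bar>fst p - fst y\<bar> < \<epsilon> \<and> norm (id (snd p j) - snd y j) < \<delta>}"
  have Ob1: "open Ob" unfolding Ob_def by (rule Oy_open)
  have Ob2: "y \<in> Ob" unfolding Ob_def using ed(1,2) by simp
  note Ob = Ob1 Ob2
  have claim: "\<exists>\<theta>. \<bar>\<theta>\<bar> < 1/2 \<and> \<rho> + real (Nn j) * \<theta> = real (Nn j) * real k" if k: "f k \<in> Ob" for k
  proof -
    have fM: "f k \<in> M" using TM by blast
    then have h: "\<tau> k \<in> {0..1}" "sk k \<in> Sol" using MX by (auto simp: f_def)
    have hk: "\<bar>\<tau> k - fst y\<bar> < \<epsilon>" "norm (sk k j - snd y j) < \<delta>" using k by (auto simp: Ob_def f_def)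
    have "\<exists>\<theta>. \<bar>\<theta>\<bar> < 1/2 \<and> sk k j = snd y j * cis (2 * pi * \<theta>) \<and> (\<tau> k, sk k j) \<in> W \<and>
        (\<forall>r. phi r s0 j = snd y j \<longrightarrow> path_component Wt (fst y, r) (\<tau> k, r + real (Nn j) * \<theta>))"
      using ed(3) h(1) hk(1) h(2) hk(2) by blast
    then obtain \<theta> where \<theta>: "\<bar>\<theta>\<bar> < 1/2" "sk k j = snd y j * cis (2 * pi * \<theta>)"
      "\<forall>r. phi r s0 j = snd y j \<longrightarrow> path_component Wt (fst y, r) (\<tau> k, r + real (Nn j) * \<theta>)"
      by blast
    have "path_component Wt (fst y, \<rho>) (\<tau> k, \<rho> + real (Nn j) * \<theta>)" using \<theta>(3) \<rho>(2) by simp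
    then have "(\<tau> k, \<rho> + real (Nn j) * \<theta>) \<in> At" using \<rho>(1) unfolding At_def
      by (metis mem_Collect_eq path_component_trans)
    then have EA: "E (\<tau> k, \<rho> + real (Nn j) * \<theta>) \<in> A" by (simp add: A_def)
    have "phi (\<rho> + real (Nn j) * \<theta>) s0 j = phi \<rho> s0 j * cis (2 * pi * \<theta>)"
      using phi_shift[of \<rho> "real (Nn j) * \<theta>" s0 j] Nn_pos[of j] by (simp add: mult.assoc)
    then have "snd (E (\<tau> k, \<rho> + real (Nn j) * \<theta>)) j = snd (f k) j"
      using \<theta>(2) \<rho>(2) by (simp add: E_def f_def)
    moreover have "f k \<in> A" using M_A[OF K0'] fM by blast
    moreover have "fst (E (\<tau> k, \<rho> + real (Nn j) * \<theta>)) = fst (f k)" by (simp add: E_def f_def)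
    ultimately have "E (\<tau> k, \<rho> + real (Nn j) * \<theta>) = f k"
      using inj_A[OF K0' EA] by blast
    then have "phi (\<rho> + real (Nn j) * \<theta>) s0 = phi (real (Nn j) * real k) s0" by (simp add: E_def f_def sk_def)
    then have "\<rho> + real (Nn j) * \<theta> = real (Nn j) * real k" by (rule phi_inj[OF s0])
    then show ?thesis using \<theta>(1) by blast
  qed
  obtain p1 where p1: "p1 \<in> range f" "p1 \<in> Ob" "p1 \<noteq> y" using islimptE[OF y(2) Ob(2) Ob(1)] by metis
  have "open (Ob - {p1})" using Ob(1) by (intro open_Diff) auto
  then obtain p2 where p2: "p2 \<in> range f" "p2 \<in> Ob - {p1}" "p2 \<noteq> y"
    using islimptE[OF y(2), of "Ob - {p1}"] Ob(2) p1(3) by blast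
  obtain k1 k2 where k: "p1 = f k1" "p2 = f k2" using p1(1) p2(1) by blast
  have "k1 \<noteq> k2" using k p2(2) by auto
  obtain \<theta>1 where \<theta>1: "\<bar>\<theta>1\<bar> < 1/2" "\<rho> + real (Nn j) * \<theta>1 = real (Nn j) * real k1" using claim p1(2) k(1) by blast
  obtain \<theta>2 where \<theta>2: "\<bar>\<theta>2\<bar> < 1/2" "\<rho> + real (Nn j) * \<theta>2 = real (Nn j) * real k2" using claim p2(2) k(2) by blast
  have "real (Nn j) * (\<theta>1 - \<theta>2) = real (Nn j) * (real k1 - real k2)" using \<theta>1(2) \<theta>2(2) by (simp add: algebra_simps)
  then have "\<theta>1 - \<theta>2 = real k1 - real k2" using Nn_pos[of j] by simp
  then have "\<bar>real k1 - real k2\<bar> < 1" using \<theta>1(1) \<theta>2(1) by linarith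
  then have "k1 = k2" by linarith
  then show False using \<open>k1 \<noteq> k2\<close> by blast
qed

end


context main begin

lemma V0_snd: "y \<in> V0 \<Longrightarrow> snd y \<in> Sol"
proof -
  assume "y \<in> V0"
  then have "y \<in> {0..1} \<times> Sol" using V0_sub unfolding Xs_def by blast
  then show ?thesis by (auto simp: mem_Times_iff)
qed

lemma stab: assumes k0: "k0 \<noteq> 0"
  shows "\<exists>l0\<ge>j. \<forall>l\<ge>l0. \<forall>c::int. \<exists>u v. int (Pw l0 j) * c = u * k0 + v * int (Pw l j)"
proof -
  define G where "G l = gcd k0 (int (Pw l j))" for l
  have Gpos: "G l > 0" for l using k0 by (simp add: G_def)
  have Gle: "G l \<le> \<bar>k0\<bar>" for l
    using dvd_imp_le_int[OF k0, of "G l"] Gpos[of l] by (simp add: G_def)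
  have Gdvd: "G l dvd G l'" if "j \<le> l" "l \<le> l'" for l l'
  proof -
    have "int (Pw l j) dvd int (Pw l' j)" using Pw_trans[OF that] by simp
    then show ?thesis unfolding G_def by (meson dvd_trans gcd_dvd1 gcd_dvd2 gcd_greatest)
  qed
  define S where "S = G ` {j..}"
  have fS: "finite S"
  proof (rule finite_subset)
    show "S \<subseteq> {1..\<bar>k0\<bar>}" using Gpos Gle by (auto simp: S_def Suc_le_eq zero_less_iff_neq_zero[symmetric] int_one_le_iff_zero_less)
  qed simp
  have "S \<noteq> {}" by (simp add: S_def)
  then have "Max S \<in> S" using Max_in[OF fS] by blast
  then obtain l0 where l0: "l0 \<ge> j" "G l0 = Max S" by (auto simp: S_def)
  have Geq: "G l = G l0" if "l \<ge> l0" for l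
  proof -
    have "G l0 dvd G l" using Gdvd l0(1) that by blast
    then have "G l0 \<le> G l" using Gpos by (intro zdvd_imp_le) auto
    moreover have "G l \<le> G l0" using l0 fS that by (auto simp: S_def intro!: Max_ge)
    ultimately show ?thesis by simp
  qed
  show ?thesis
  proof (intro exI[of _ l0] conjI allI impI)
    show "j \<le> l0" by (rule l0(1))
    fix l c assume l: "l0 \<le> l"
    have "G l dvd int (Pw l0 j)" using Geq[OF l] by (simp add: G_def)
    then obtain q where q: "int (Pw l0 j) = G l * q" by (auto elim: dvdE)
    obtain u v where uv: "u * k0 + v * int (Pw l j) = G l" using bezout_int[of k0 "int (Pw l j)"] by (auto simp: G_def)
    show "\<exists>u v. int (Pw l0 j) * c = u * k0 + v * int (Pw l j)"
      by (rule exI[of _ "u * q * c"], rule exI[of _ "v * q * c"]) (simp add: q uv[symmetric] algebra_simps)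
  qed
qed

lemma approx:
  assumes k0: "k0 \<in> K" and l0: "j \<le> l0"
    and bez: "\<forall>l\<ge>l0. \<forall>c::int. \<exists>u v. int (Pw l0 j) * c = u * k0 + v * int (Pw l j)"
    and y: "y \<in> Vl l0" and L: "l0 \<le> L"
  shows "\<exists>a'\<in>A. fst a' = fst y \<and> snd a' L = snd y L"
proof -
  obtain a where a: "a \<in> A" "fst a = fst y" "snd a l0 = snd y l0" using y by (auto simp: Vl_def)
  obtain r where r: "(fst y, r) \<in> At" "snd a = phi r s0" using A_E[OF a(1)] a(2) by metis
  have sy: "snd y \<in> Sol" using y Vl_sub V0_snd by blast
  have sp: "phi r s0 \<in> Sol" by (rule phi_Sol[OF s0])
  define w where "w = snd y L"
  define v where "v = phi r s0 L"
  have nv: "norm v = 1" "norm w = 1" using SolD(1)[OF sp] SolD(1)[OF sy] by (auto simp: v_def w_def)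
  define P where "P = Pw L l0"
  have P0: "P > 0" using Pw_pos by (simp add: P_def)
  have "w ^ P = v ^ P" using Sol_pow[OF sy L] Sol_pow[OF sp L] a(3) r(2) by (simp add: w_def v_def P_def)
  then have "(w / v) ^ P = 1" using nv by (auto simp: power_divide)
  moreover obtain \<theta> where \<theta>: "w / v = cis (2 * pi * \<theta>)" using unit_cis[of "w / v"] nv by (auto simp: norm_divide)
  ultimately have "cis (real P * (2 * pi * \<theta>)) = 1" by (simp add: cis_pow)
  then obtain c :: int where c: "real P * (2 * pi * \<theta>) = 2 * pi * of_int c" using cis_eq_1_int by blast
  then have \<theta>c: "\<theta> = of_int c / real P" using P0 by (simp add: field_simps)
  obtain u v' where uv: "int (Pw l0 j) * c = u * k0 + v' * int (Pw L j)" using bez L by blast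
  have NL: "real (Nn L) = real (Nn l0) * real P" using Nn_ratio[OF L] by (simp add: P_def)
  have "phi (r + real (Nn l0) * of_int c) s0 L = v * cis (2 * pi * (real (Nn l0) * of_int c) / real (Nn L))"
    unfolding v_def by (rule phi_shift)
  also have "2 * pi * (real (Nn l0) * of_int c) / real (Nn L) = 2 * pi * \<theta>"
    using NL \<theta>c Nn_pos[of l0] P0 by (simp add: field_simps)
  also have "v * cis (2 * pi * \<theta>) = w"
  proof -
    have "v \<noteq> 0" using nv by auto
    then have "v * (w / v) = w" by simp
    then show ?thesis using \<theta> by metis
  qed
  finally have e1: "phi (r + real (Nn l0) * of_int c) s0 L = w" .
  have "real (Nn l0) * of_int c = real (Nn j) * of_int (u * k0) + real (Nn L) * of_int v'"
  proof -
    have "real (Nn l0) * of_int c = real (Nn j) * of_int (int (Pw l0 j) * c)"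
      using Nn_ratio[OF l0] by simp
    also have "\<dots> = real (Nn j) * of_int (u * k0) + real (Nn j) * real (Pw L j) * of_int v'"
      unfolding uv by (simp add: algebra_simps)
    also have "real (Nn j) * real (Pw L j) = real (Nn L)" using Nn_ratio[OF order_trans[OF l0 L]] by simp
    finally show ?thesis .
  qed
  then have "phi (r + real (Nn l0) * of_int c) s0 L = phi (r + real (Nn j) * of_int (u * k0)) s0 L"
    using phi_shift_Nn[of L L "r + real (Nn j) * of_int (u * k0)" v' s0] by (simp add: add.assoc)
  then have e2: "phi (r + real (Nn j) * of_int (u * k0)) s0 L = w" using e1 by simp
  have "(fst y, r + real (Nn j) * of_int (u * k0)) \<in> At" using TR'[OF r(1) K_mult[OF k0]] .
  then have "E (fst y, r + real (Nn j) * of_int (u * k0)) \<in> A" by (simp add: A_def)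
  then show ?thesis using e2 by (intro bexI) (auto simp: E_def w_def)
qed

lemma main_result: "\<exists>V. openin (top_of_set Xs) V \<and> connected V \<and> M \<subseteq> V \<and> V \<subseteq> V0"
proof -
  obtain k0 where k0: "k0 \<in> K" "k0 \<noteq> 0" using K_nz by blast
  obtain l0 where l0: "j \<le> l0" "\<forall>l\<ge>l0. \<forall>c::int. \<exists>u v. int (Pw l0 j) * c = u * k0 + v * int (Pw l j)"
    using stab[OF k0(2)] by blast
  have cl: "Vl l0 \<subseteq> closure A"
  proof
    fix y assume y: "y \<in> Vl l0"
    have sy: "snd y \<in> Sol" using y Vl_sub V0_snd by blast
    show "y \<in> closure A"
      unfolding closure_iff_nhds_not_empty
    proof (intro allI impI)
      fix T S assume h: "S \<subseteq> T" "open S" "y \<in> S"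
      obtain A' B' where AB: "open A'" "open B'" "y \<in> A' \<times> B'" "A' \<times> B' \<subseteq> S"
        using open_prod_elim[OF h(2,3)] by metis
      obtain l1 \<delta> where l1: "\<delta> > 0" "\<forall>s'\<in>Sol. norm (s' l1 - snd y l1) < \<delta> \<longrightarrow> s' \<in> B'"
        using Sol_nbhd[OF AB(2) _ sy] AB(3) by (metis mem_Times_iff)
      obtain a' where a': "a' \<in> A" "fst a' = fst y" "snd a' (max l1 l0) = snd y (max l1 l0)"
        using approx[OF k0(1) l0(1) l0(2) y, of "max l1 l0"] by auto
      have "snd a' l1 = snd y l1" using Sol_eq_lower[OF A_Sol[OF a'(1)] sy a'(3)] by simp
      then have "snd a' \<in> B'" using l1 A_Sol[OF a'(1)] by simp
      moreover have "fst a' \<in> A'" using a'(2) AB(3) by auto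
      ultimately have "a' \<in> T" using AB(4) h(1) by (metis mem_Times_iff subsetD)
      then show "A \<inter> T \<noteq> {}" using a'(1) by blast
    qed
  qed
  have AV: "A \<subseteq> Vl l0" using A_V0 by (auto simp: Vl_def)
  show ?thesis
    using Vl_open[OF l0(1)] connected_intermediate_closure[OF A_connected AV cl] M_Vl[OF l0(1)] Vl_sub
    by blast
qed

end

context sol begin

theorem core:
  fixes M U :: "(real \<times> (nat \<Rightarrow> complex)) set"
  assumes M: "compact M" "connected M" "M \<noteq> {}" "M \<subseteq> {0..1} \<times> Sol" "snd ` M = Sol"
    and U: "openin (top_of_set ({0..1} \<times> Sol)) U" "M \<subseteq> U"
  shows "\<exists>V. openin (top_of_set ({0..1} \<times> Sol)) V \<and> connected V \<and> M \<subseteq> V \<and> V \<subseteq> U"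
proof -
  obtain j W where jW: "open W" "M \<subseteq> {x \<in> {0..1} \<times> Sol. (fst x, snd x j) \<in> W}"
      "{x \<in> {0..1} \<times> Sol. (fst x, snd x j) \<in> W} \<subseteq> U"
    using level[OF M(1) M(4) U] by blast
  obtain t0 s0 where x0: "(t0, s0) \<in> M" using M(3) by auto
  interpret main n M j W t0 s0
    by unfold_locales (use M jW x0 in auto)
  obtain V where V: "openin (top_of_set Xs) V" "connected V" "M \<subseteq> V" "V \<subseteq> V0"
    using main_result by blast
  show ?thesis using V jW(3) by (intro exI[of _ V]) (auto simp: Xs_def V0_def)
qed

end

theorem fupcon_solenoid_limit:
  assumes n: "\<And>i. n i \<ge> 2"
  shows "fupcon (top_of_set {0..1::real}) (solenoid_inverse_limit n)"
proof -
  interpret sol n by unfold_locales (rule n)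
  have SL: "solenoid_inverse_limit n = top_of_set Sol"
    by (simp add: solenoid_inverse_limit_def euclidean_product_topology Sol_def)
  show ?thesis
    unfolding fupcon_def SL prod_topology_subtopology_eu continuum_in_def
  proof (intro allI impI, elim conjE)
    fix M U
    assume h: "M \<noteq> {}" "compactin (top_of_set ({0..1} \<times> Sol)) M" "connectedin (top_of_set ({0..1} \<times> Sol)) M"
      "fst ` M = topspace (top_of_set {0..1::real})" "snd ` M = topspace (top_of_set Sol)"
      "openin (top_of_set ({0..1} \<times> Sol)) U" "M \<subseteq> U"
    have M: "compact M" "M \<subseteq> {0..1} \<times> Sol" "connected M"
      using h(2,3) by (auto simp: compactin_subtopology connectedin_subtopology)
    obtain V where V: "openin (top_of_set ({0..1} \<times> Sol)) V" "connected V" "M \<subseteq> V" "V \<subseteq> U"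
    proof -
      have "snd ` M = Sol" using h(5) by simp
      then show ?thesis using core[OF M(1) M(3) h(1) M(2) _ h(6) h(7)] that by blast
    qed
    have "V \<subseteq> {0..1} \<times> Sol" using openin_imp_subset[OF V(1)] .
    then have "connectedin (top_of_set ({0..1} \<times> Sol)) V" using V(2) by (simp add: connectedin_subtopology)
    then show "\<exists>V. openin (top_of_set ({0..1} \<times> Sol)) V \<and> connectedin (top_of_set ({0..1} \<times> Sol)) V \<and> M \<subseteq> V \<and> V \<subseteq> U"
      using V by blast
  qed
qed



theorem theorem1:
  fixes S :: "'a topology"
  assumes "solenoid S"
  shows "fupcon (top_of_set {0..1::real}) S"
proof -
  obtain n where n: "\<forall>i. n i \<ge> 2" "S homeomorphic_space solenoid_inverse_limit n"
    using assms unfolding solenoid_def by blast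
  have "fupcon (top_of_set {0..1::real}) (solenoid_inverse_limit n)"
    using n(1) by (intro fupcon_solenoid_limit) blast
  then show ?thesis using fupcon_homeo[OF n(2)] by blast
qed

end
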